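(* Let $P$ be a join-semilattice with a least element. Then $\dim_\vee(P)\leq\dim_\nabla(\mathrm{Id}(P))$, and equality holds if $\dim_\vee(P)$ is finite.
   Context: $\mathrm{Id}(P)$ is the complete lattice of ideals of $P$ (non-empty up-directed initial segments) ordered by inclusion. $\dim_\vee(P)$ is the least cardinal $\kappa$ such that $P$ admits a one-to-one join-preserving map into a direct product of $\kappa$ chains. $\dim_\nabla(L)$, for a complete lattice $L$, is the least cardinal $\kappa$ such that $L$ admits a one-to-one map preserving arbitrary joins into a direct product of $\kappa$ complete chains. *)

theory Defs
  imports Main
begin

text \<open>A join-semilattice with a least element is modelled by a type of class
  semilattice_sup + order_bot; P is the whole type.\<close>

definition is_ideal :: "'a::order set \<Rightarrow> bool" where
  "is_ideal X \<longleftrightarrow> X \<noteq> {} \<and> (\<forall>x\<in>X. \<forall>y. y \<le> x \<longrightarrow> y \<in> X)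
      \<and> (\<forall>x\<in>X. \<forall>y\<in>X. \<exists>z\<in>X. x \<le> z \<and> y \<le> z)"

definition Id_lattice :: "'a::order set set" where
  "Id_lattice = {X. is_ideal X}"

definition chain_on :: "'c set \<Rightarrow> ('c \<Rightarrow> 'c \<Rightarrow> bool) \<Rightarrow> bool" where
  "chain_on C le \<longleftrightarrow> (\<forall>x\<in>C. le x x)
     \<and> (\<forall>x\<in>C. \<forall>y\<in>C. le x y \<and> le y x \<longrightarrow> x = y)
     \<and> (\<forall>x\<in>C. \<forall>y\<in>C. \<forall>z\<in>C. le x y \<and> le y z \<longrightarrow> le x z)
     \<and> (\<forall>x\<in>C. \<forall>y\<in>C. le x y \<or> le y x)"

definition is_lub :: "'c set \<Rightarrow> ('c \<Rightarrow> 'c \<Rightarrow> bool) \<Rightarrow> 'c set \<Rightarrow> 'c \<Rightarrow> bool" where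
  "is_lub C le S z \<longleftrightarrow> z \<in> C \<and> (\<forall>s\<in>S. le s z) \<and> (\<forall>u\<in>C. (\<forall>s\<in>S. le s u) \<longrightarrow> le z u)"

definition complete_chain :: "'c set \<Rightarrow> ('c \<Rightarrow> 'c \<Rightarrow> bool) \<Rightarrow> bool" where
  "complete_chain C le \<longleftrightarrow> chain_on C le \<and> (\<forall>S\<subseteq>C. \<exists>z. is_lub C le S z)"

text \<open>f is a one-to-one join-preserving map from P (the whole type 'a) into the
  direct product of the chains (C i, L i), i \<in> I.  Joins in a product are
  computed componentwise.\<close>
definition vee_embedding ::
  "'i set \<Rightarrow> ('i \<Rightarrow> 'c set) \<Rightarrow> ('i \<Rightarrow> 'c \<Rightarrow> 'c \<Rightarrow> bool) \<Rightarrow> ('a::semilattice_sup \<Rightarrow> 'i \<Rightarrow> 'c) \<Rightarrow> bool"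
where
  "vee_embedding I C L f \<longleftrightarrow>
     (\<forall>i\<in>I. chain_on (C i) (L i))
   \<and> (\<forall>x. \<forall>i\<in>I. f x i \<in> C i)
   \<and> (\<forall>x y. \<forall>i\<in>I. is_lub (C i) (L i) {f x i, f y i} (f (sup x y) i))
   \<and> (\<forall>x y. (\<forall>i\<in>I. f x i = f y i) \<longrightarrow> x = y)"

definition nabla_embedding ::
  "'b set \<Rightarrow> ('b \<Rightarrow> 'b \<Rightarrow> bool) \<Rightarrow> 'i set \<Rightarrow> ('i \<Rightarrow> 'c set) \<Rightarrow> ('i \<Rightarrow> 'c \<Rightarrow> 'c \<Rightarrow> bool)
     \<Rightarrow> ('b \<Rightarrow> 'i \<Rightarrow> 'c) \<Rightarrow> bool"
where
  "nabla_embedding A leA I C L g \<longleftrightarrow>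
     (\<forall>i\<in>I. complete_chain (C i) (L i))
   \<and> (\<forall>x\<in>A. \<forall>i\<in>I. g x i \<in> C i)
   \<and> (\<forall>S\<subseteq>A. \<forall>x. is_lub A leA S x \<longrightarrow>
        (\<forall>i\<in>I. is_lub (C i) (L i) ((\<lambda>y. g y i) ` S) (g x i)))
   \<and> (\<forall>x\<in>A. \<forall>y\<in>A. (\<forall>i\<in>I. g x i = g y i) \<longrightarrow> x = y)"

end

theory Submission imports Defs begin

lemma ideal_ne: "is_ideal X \<Longrightarrow> X \<noteq> {}" unfolding is_ideal_def by metis
lemma ideal_down: "is_ideal X \<Longrightarrow> x \<in> X \<Longrightarrow> y \<le> x \<Longrightarrow> y \<in> X" unfolding is_ideal_def by metis
lemma ideal_dir: "is_ideal X \<Longrightarrow> a \<in> X \<Longrightarrow> b \<in> X \<Longrightarrow> \<exists>z\<in>X. a \<le> z \<and> b \<le> z" unfolding is_ideal_def by metis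
lemma ideal_intro: "X \<noteq> {} \<Longrightarrow> (\<And>x y. x \<in> X \<Longrightarrow> y \<le> x \<Longrightarrow> y \<in> X) \<Longrightarrow> (\<And>a b. a \<in> X \<Longrightarrow> b \<in> X \<Longrightarrow> \<exists>z\<in>X. a \<le> z \<and> b \<le> z) \<Longrightarrow> is_ideal X"
  unfolding is_ideal_def by metis

lemma ideal_sup:
  assumes "is_ideal (Y::'a::semilattice_sup set)" "a \<in> Y" "b \<in> Y"
  shows "sup a b \<in> Y"
proof -
  obtain z where "z \<in> Y" "a \<le> z" "b \<le> z" using ideal_dir[OF assms] by blast
  then show ?thesis using ideal_down[OF assms(1)] by (meson le_sup_iff)
qed

lemma ideal_bot:
  assumes "is_ideal (Y::'a::order_bot set)"
  shows "bot \<in> Y"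
  using ideal_ne[OF assms] ideal_down[OF assms] by (metis all_not_in_conv bot_least)

lemma down_ideal: "is_ideal {y::'a::semilattice_sup. y \<le> x}"
  by (rule ideal_intro) (auto intro: order_trans)

lemma down_lub:
  "is_lub Id_lattice (\<subseteq>) {{y::'a::semilattice_sup. y \<le> a}, {y. y \<le> b}} {y. y \<le> sup a b}"
  unfolding is_lub_def Id_lattice_def
proof (intro conjI ballI impI)
  show "{y. y \<le> sup a b} \<in> {X. is_ideal X}" using down_ideal by auto
next
  fix s assume "s \<in> {{y. y \<le> a}, {y. y \<le> b}}"
  then show "s \<subseteq> {y. y \<le> sup a b}" by (auto intro: le_supI1 le_supI2)
next
  fix u assume u: "u \<in> {X. is_ideal X}" and h: "\<forall>s\<in>{{y. y \<le> a}, {y. y \<le> b}}. s \<subseteq> u"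
  then have a: "a \<in> u" and b: "b \<in> u" by auto
  from u have iu: "is_ideal u" by auto
  have "sup a b \<in> u" using ideal_sup[OF iu a b] .
  then show "{y. y \<le> sup a b} \<subseteq> u" using ideal_down[OF iu] by blast
qed

lemma part1:
  fixes g :: "'a::semilattice_sup set \<Rightarrow> 'i \<Rightarrow> 'c"
  assumes "nabla_embedding Id_lattice (\<subseteq>) I C L g"
  shows "vee_embedding I C L (\<lambda>x. g {y. y \<le> x})"
proof -
  have id: "\<And>x::'a. {y. y \<le> x} \<in> Id_lattice" using down_ideal unfolding Id_lattice_def by auto
  have A1: "\<forall>i\<in>I. complete_chain (C i) (L i)"
   and A2: "\<forall>x\<in>Id_lattice. \<forall>i\<in>I. g x i \<in> C i"
   and A3: "\<forall>S\<subseteq>Id_lattice. \<forall>x. is_lub Id_lattice (\<subseteq>) S x \<longrightarrow>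
        (\<forall>i\<in>I. is_lub (C i) (L i) ((\<lambda>y. g y i) ` S) (g x i))"
   and A4: "\<forall>x\<in>Id_lattice. \<forall>y\<in>Id_lattice. (\<forall>i\<in>I. g x i = g y i) \<longrightarrow> x = y"
    using assms unfolding nabla_embedding_def by auto
  show ?thesis unfolding vee_embedding_def
  proof (intro conjI allI ballI impI)
    fix i assume "i \<in> I" then show "chain_on (C i) (L i)"
      using A1 unfolding complete_chain_def by auto
  next
    fix x :: 'a and i assume "i \<in> I" then show "g {y. y \<le> x} i \<in> C i"
      using A2 id by auto
  next
    fix x y :: 'a and i assume i: "i \<in> I"
    have s: "{{z. z \<le> x}, {z. z \<le> y}} \<subseteq> Id_lattice" using id by auto
    have "is_lub (C i) (L i) ((\<lambda>Y. g Y i) ` {{z. z \<le> x}, {z. z \<le> y}}) (g {z. z \<le> sup x y} i)"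
      using A3 s down_lub[of x y] i by blast
    then show "is_lub (C i) (L i) {g {z. z \<le> x} i, g {z. z \<le> y} i} (g {z. z \<le> sup x y} i)"
      by simp
  next
    fix x y :: 'a assume "\<forall>i\<in>I. g {z. z \<le> x} i = g {z. z \<le> y} i"
    then have "{z. z \<le> x} = {z. z \<le> y}" using A4 id by blast
    then show "x = y" by (metis antisym mem_Collect_eq order_refl)
  qed
qed
lemma chain_refl: "chain_on C le \<Longrightarrow> x \<in> C \<Longrightarrow> le x x" unfolding chain_on_def by metis
lemma chain_antisym: "chain_on C le \<Longrightarrow> x \<in> C \<Longrightarrow> y \<in> C \<Longrightarrow> le x y \<Longrightarrow> le y x \<Longrightarrow> x = y" unfolding chain_on_def by metis
lemma chain_trans: "chain_on C le \<Longrightarrow> x \<in> C \<Longrightarrow> y \<in> C \<Longrightarrow> z \<in> C \<Longrightarrow> le x y \<Longrightarrow> le y z \<Longrightarrow> le x z" unfolding chain_on_def by metis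
lemma chain_total: "chain_on C le \<Longrightarrow> x \<in> C \<Longrightarrow> y \<in> C \<Longrightarrow> le x y \<or> le y x" unfolding chain_on_def by metis

lemma chain_lub2:
  assumes "chain_on C le" "a \<in> C" "b \<in> C" "is_lub C le {a,b} z"
  shows "z = a \<or> z = b"
proof -
  from assms(4) have z: "z \<in> C" "le a z" "le b z" "\<And>u. u\<in>C \<Longrightarrow> le a u \<Longrightarrow> le b u \<Longrightarrow> le z u"
    unfolding is_lub_def by auto
  have ra: "le a a" "le b b" using chain_refl assms by metis+
  show ?thesis
  proof (cases "le a b")
    case True
    then have "le z b" using z(4)[OF assms(3)] ra by blast
    then show ?thesis using chain_antisym[OF assms(1) z(1) assms(3)] z by blast
  next
    case False
    then have "le b a" using chain_total[OF assms(1-3)] by blast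
    then have "le z a" using z(4)[OF assms(2)] ra by blast
    then show ?thesis using chain_antisym[OF assms(1) z(1) assms(2)] z by blast
  qed
qed

lemma ideal_finite_ub:
  assumes "is_ideal (Y::'a::{semilattice_sup,order_bot} set)" "finite F" "F \<subseteq> Y"
  shows "\<exists>z\<in>Y. \<forall>y\<in>F. y \<le> z"
  using assms(2,3)
proof (induction F rule: finite_induct)
  case empty then show ?case using ideal_bot[OF assms(1)] by blast
next
  case (insert a F)
  then obtain z where z: "z \<in> Y" "\<forall>y\<in>F. y \<le> z" by auto
  have a: "a \<in> Y" using insert by auto
  have "sup a z \<in> Y" using ideal_sup[OF assms(1) a z(1)] .
  moreover have "\<forall>y\<in>insert a F. y \<le> sup a z" using z(2) by (simp add: le_supI2)
  ultimately show ?case by blast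
qed
context
  fixes J :: "'j set" and D :: "'j \<Rightarrow> 'd set" and M :: "'j \<Rightarrow> 'd \<Rightarrow> 'd \<Rightarrow> bool"
    and f :: "'a::{semilattice_sup,order_bot} \<Rightarrow> 'j \<Rightarrow> 'd"
  assumes fin: "finite J" and ve: "vee_embedding J D M f"
begin

lemma ch: "j \<in> J \<Longrightarrow> chain_on (D j) (M j)"
  using ve unfolding vee_embedding_def by auto

lemma inD: "j \<in> J \<Longrightarrow> f x j \<in> D j"
  using ve unfolding vee_embedding_def by auto

lemma lubf: "j \<in> J \<Longrightarrow> is_lub (D j) (M j) {f x j, f y j} (f (sup x y) j)"
  using ve unfolding vee_embedding_def by auto

lemma mono_f: "j \<in> J \<Longrightarrow> x \<le> y \<Longrightarrow> M j (f x j) (f y j)"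
  using lubf[of j x y] by (simp add: sup_absorb2 is_lub_def)

lemma refl_M: "j \<in> J \<Longrightarrow> c \<in> D j \<Longrightarrow> M j c c"
  by (rule chain_refl[OF ch])

lemma trans_M: "j \<in> J \<Longrightarrow> a \<in> D j \<Longrightarrow> b \<in> D j \<Longrightarrow> c \<in> D j \<Longrightarrow> M j a b \<Longrightarrow> M j b c \<Longrightarrow> M j a c"
  by (rule chain_trans[OF ch])

lemma antisym_M: "j \<in> J \<Longrightarrow> a \<in> D j \<Longrightarrow> b \<in> D j \<Longrightarrow> M j a b \<Longrightarrow> M j b a \<Longrightarrow> a = b"
  by (rule chain_antisym[OF ch])

lemma total_M: "j \<in> J \<Longrightarrow> a \<in> D j \<Longrightarrow> b \<in> D j \<Longrightarrow> M j a b \<or> M j b a"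
  by (rule chain_total[OF ch])

definition CC :: "'j \<Rightarrow> 'd set set" where
  "CC j = {S. S \<subseteq> D j \<and> (\<forall>c\<in>S. \<forall>c'\<in>D j. M j c' c \<longrightarrow> c' \<in> S) \<and> f bot j \<in> S}"

definition gg :: "'a set \<Rightarrow> 'j \<Rightarrow> 'd set" where
  "gg X j = {c \<in> D j. \<exists>x\<in>X. M j c (f x j)}"

definition BB :: "'j \<Rightarrow> 'd set" where
  "BB j = {c \<in> D j. M j c (f bot j)}"

lemma BB_sub: "j \<in> J \<Longrightarrow> S \<in> CC j \<Longrightarrow> BB j \<subseteq> S"
  unfolding CC_def BB_def by blast

lemma CC_chain: "j \<in> J \<Longrightarrow> chain_on (CC j) (\<subseteq>)"
  unfolding chain_on_def
proof (intro conjI ballI impI)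
  fix x y assume j: "j \<in> J" and x: "x \<in> CC j" and y: "y \<in> CC j"
  show "x \<subseteq> y \<or> y \<subseteq> x"
  proof (rule ccontr)
    assume "\<not> (x \<subseteq> y \<or> y \<subseteq> x)"
    then obtain a b where ab: "a \<in> x" "a \<notin> y" "b \<in> y" "b \<notin> x" by blast
    have "a \<in> D j" "b \<in> D j" using x y ab unfolding CC_def by auto
    then have "M j a b \<or> M j b a" using total_M j by blast
    then show False using x y ab \<open>a \<in> D j\<close> \<open>b \<in> D j\<close> unfolding CC_def by blast
  qed
qed auto

lemma CC_complete: assumes j: "j \<in> J" shows "complete_chain (CC j) (\<subseteq>)"
  unfolding complete_chain_def
proof (intro conjI allI impI)
  show "chain_on (CC j) (\<subseteq>)" by (rule CC_chain[OF j])
next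
  fix S assume S: "S \<subseteq> CC j"
  have "is_lub (CC j) (\<subseteq>) S (BB j \<union> \<Union>S)"
    unfolding is_lub_def
  proof (intro conjI ballI impI)
    have sub: "BB j \<union> \<Union> S \<subseteq> D j" using S unfolding CC_def BB_def by blast
    have bot: "f bot j \<in> BB j \<union> \<Union> S" using inD[OF j] refl_M[OF j] unfolding BB_def by blast
    have dc: "\<forall>c\<in>BB j \<union> \<Union> S. \<forall>c'\<in>D j. M j c' c \<longrightarrow> c' \<in> BB j \<union> \<Union> S"
    proof (intro ballI impI)
      fix c c' assume c: "c \<in> BB j \<union> \<Union> S" and c': "c' \<in> D j" "M j c' c"
      show "c' \<in> BB j \<union> \<Union> S"
      proof (cases "c \<in> BB j")
        case True
        then have "c \<in> D j" "M j c (f bot j)" unfolding BB_def by auto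
        then have "M j c' (f bot j)" using trans_M[OF j c'(1) _ inD[OF j] c'(2)] by blast
        then show ?thesis using c' unfolding BB_def by blast
      next
        case False
        then obtain T where "T \<in> S" "c \<in> T" using c by blast
        then have "T \<in> CC j" using S by blast
        then have "c' \<in> T" using \<open>c \<in> T\<close> c' unfolding CC_def by blast
        then show ?thesis using \<open>T \<in> S\<close> by blast
      qed
    qed
    show "BB j \<union> \<Union> S \<in> CC j" unfolding CC_def using sub bot dc by blast
  next
    fix s assume "s \<in> S" then show "s \<subseteq> BB j \<union> \<Union> S" by blast
  next
    fix u assume "u \<in> CC j" "\<forall>s\<in>S. s \<subseteq> u"
    then show "BB j \<union> \<Union> S \<subseteq> u" using BB_sub[OF j] by blast
  qed
  then show "\<exists>z. is_lub (CC j) (\<subseteq>) S z" by blast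
qed


lemma gg_CC: assumes j: "j \<in> J" and X: "is_ideal X" shows "gg X j \<in> CC j"
proof -
  have sub: "gg X j \<subseteq> D j" unfolding gg_def by blast
  have bot: "f bot j \<in> gg X j" using ideal_bot[OF X] inD[OF j] refl_M[OF j] unfolding gg_def by blast
  have dc: "\<forall>c\<in>gg X j. \<forall>c'\<in>D j. M j c' c \<longrightarrow> c' \<in> gg X j"
  proof (intro ballI impI)
    fix c c' assume c: "c \<in> gg X j" and c': "c' \<in> D j" "M j c' c"
    then obtain x where "x \<in> X" "c \<in> D j" "M j c (f x j)" unfolding gg_def by blast
    then have "M j c' (f x j)" using trans_M[OF j c'(1) _ inD[OF j] c'(2)] by blast
    then show "c' \<in> gg X j" using c' \<open>x \<in> X\<close> unfolding gg_def by blast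
  qed
  show ?thesis unfolding CC_def using sub bot dc by blast
qed

lemma lub_case:
  assumes j: "j \<in> J" and S: "S \<subseteq> Id_lattice" and X: "is_lub Id_lattice (\<subseteq>) S X"
  shows "gg X j = BB j \<union> \<Union> ((\<lambda>Y. gg Y j) ` S)"
proof
  have XL: "X \<in> Id_lattice" and ub: "\<And>Y. Y \<in> S \<Longrightarrow> Y \<subseteq> X"
    and least: "\<And>U. U \<in> Id_lattice \<Longrightarrow> (\<forall>Y\<in>S. Y \<subseteq> U) \<Longrightarrow> X \<subseteq> U"
    using X unfolding is_lub_def by auto
  have Xi: "is_ideal X" using XL unfolding Id_lattice_def by auto
  show "BB j \<union> \<Union> ((\<lambda>Y. gg Y j) ` S) \<subseteq> gg X j"
  proof -
    have "BB j \<subseteq> gg X j" using BB_sub[OF j gg_CC[OF j Xi]] .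
    moreover have "Y \<in> S \<Longrightarrow> gg Y j \<subseteq> gg X j" for Y
      using ub[of Y] unfolding gg_def by blast
    ultimately show ?thesis by blast
  qed
  define K where "K = {x. \<exists>y\<in>insert bot (\<Union>S). M j (f x j) (f y j)}"
  have KI: "K \<in> Id_lattice"
    unfolding Id_lattice_def
  proof (intro CollectI ideal_intro)
    have "bot \<in> K" unfolding K_def using refl_M[OF j inD[OF j]] by blast
    then show "K \<noteq> {}" by blast
  next
    fix x y assume x: "x \<in> K" and yx: "y \<le> x"
    then obtain w where w: "w \<in> insert bot (\<Union>S)" "M j (f x j) (f w j)" unfolding K_def by blast
    have "M j (f y j) (f w j)" using trans_M[OF j inD[OF j] inD[OF j] inD[OF j] mono_f[OF j yx] w(2)] .
    then show "y \<in> K" unfolding K_def using w(1) by blast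
  next
    fix x y assume x: "x \<in> K" and y: "y \<in> K"
    have "f (sup x y) j = f x j \<or> f (sup x y) j = f y j"
      using chain_lub2[OF ch[OF j] inD[OF j] inD[OF j] lubf[OF j]] .
    then have "sup x y \<in> K" using x y unfolding K_def by auto
    then show "\<exists>z\<in>K. x \<le> z \<and> y \<le> z" by (metis sup_ge1 sup_ge2)
  qed
  have "\<forall>Y\<in>S. Y \<subseteq> K"
  proof (intro ballI subsetI)
    fix Y x assume "Y \<in> S" "x \<in> Y"
    then show "x \<in> K" unfolding K_def using refl_M[OF j inD[OF j]] by blast
  qed
  then have XK: "X \<subseteq> K" using least[OF KI] by blast
  show "gg X j \<subseteq> BB j \<union> \<Union> ((\<lambda>Y. gg Y j) ` S)"
  proof
    fix c assume "c \<in> gg X j"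
    then obtain x where c: "c \<in> D j" "x \<in> X" "M j c (f x j)" unfolding gg_def by blast
    then have "x \<in> K" using XK by blast
    then obtain y where y: "y \<in> insert bot (\<Union>S)" "M j (f x j) (f y j)" unfolding K_def by blast
    have cy: "M j c (f y j)" using trans_M[OF j c(1) inD[OF j] inD[OF j] c(3) y(2)] .
    show "c \<in> BB j \<union> \<Union> ((\<lambda>Y. gg Y j) ` S)"
    proof (cases "y = bot")
      case True then show ?thesis using cy c(1) unfolding BB_def by auto
    next
      case False
      then obtain Y where "Y \<in> S" "y \<in> Y" using y(1) by blast
      then have "c \<in> gg Y j" using cy c(1) unfolding gg_def by blast
      then show ?thesis using \<open>Y \<in> S\<close> by blast
    qed
  qed
qed

lemma ideal_incl:
  assumes X: "is_ideal X" and Y: "is_ideal Y" and e: "\<forall>i\<in>J. gg X i = gg Y i"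
  shows "X \<subseteq> Y"
proof
  fix x assume x: "x \<in> X"
  have "\<forall>j\<in>J. \<exists>y\<in>Y. M j (f x j) (f y j)"
  proof
    fix j assume j: "j \<in> J"
    have "f x j \<in> gg X j" unfolding gg_def using x inD[OF j] refl_M[OF j inD[OF j]] by blast
    then have "f x j \<in> gg Y j" using e j by auto
    then show "\<exists>y\<in>Y. M j (f x j) (f y j)" unfolding gg_def by blast
  qed
  then obtain h where h: "\<And>j. j \<in> J \<Longrightarrow> h j \<in> Y \<and> M j (f x j) (f (h j) j)" by metis
  have "h ` J \<subseteq> Y" using h by blast
  then obtain z where z: "z \<in> Y" "\<forall>y\<in>h ` J. y \<le> z"
    using ideal_finite_ub[OF Y, of "h ` J"] fin by blast
  have "\<forall>j\<in>J. f (sup x z) j = f z j"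
  proof
    fix j assume j: "j \<in> J"
    have "h j \<le> z" using z(2) j by blast
    then have "M j (f (h j) j) (f z j)" using mono_f[OF j] by blast
    then have xz: "M j (f x j) (f z j)"
      using trans_M[OF j inD[OF j] inD[OF j] inD[OF j]] h[OF j] by blast
    have L: "is_lub (D j) (M j) {f x j, f z j} (f (sup x z) j)" using lubf[OF j] .
    have "M j (f (sup x z) j) (f z j)" using L xz refl_M[OF j inD[OF j]] inD[OF j]
      unfolding is_lub_def by blast
    moreover have "M j (f z j) (f (sup x z) j)" using L unfolding is_lub_def by blast
    ultimately show "f (sup x z) j = f z j" using antisym_M[OF j inD[OF j] inD[OF j]] by blast
  qed
  then have "sup x z = z" using ve unfolding vee_embedding_def by blast
  then have "x \<le> z" by (metis sup_ge1)
  then show "x \<in> Y" using ideal_down[OF Y z(1)] by blast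
qed

lemma part2: "nabla_embedding Id_lattice (\<subseteq>) J CC (\<lambda>_. (\<subseteq>)) gg"
  unfolding nabla_embedding_def
proof (intro conjI ballI allI impI)
  fix i assume "i \<in> J" then show "complete_chain (CC i) (\<subseteq>)" by (rule CC_complete)
next
  fix x :: "'a set" and i assume "x \<in> Id_lattice" "i \<in> J" then show "gg x i \<in> CC i"
    using gg_CC unfolding Id_lattice_def by simp
next
  fix S :: "'a set set" and x i assume S: "S \<subseteq> Id_lattice" and X: "is_lub Id_lattice (\<subseteq>) S x" and i: "i \<in> J"
  have eq: "gg x i = BB i \<union> \<Union> ((\<lambda>Y. gg Y i) ` S)" using lub_case[OF i S X] .
  have "x \<in> Id_lattice" using X unfolding is_lub_def by simp
  then have Xi: "is_ideal x" unfolding Id_lattice_def by simp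
  show "is_lub (CC i) (\<subseteq>) ((\<lambda>y. gg y i) ` S) (gg x i)"
    unfolding is_lub_def
  proof (intro conjI ballI impI)
    show "gg x i \<in> CC i" using gg_CC[OF i Xi] .
  next
    fix s assume "s \<in> (\<lambda>y. gg y i) ` S" then show "s \<subseteq> gg x i" unfolding eq by blast
  next
    fix u assume u: "u \<in> CC i" "\<forall>s\<in>(\<lambda>y. gg y i) ` S. s \<subseteq> u"
    have "BB i \<subseteq> u" using BB_sub[OF i u(1)] .
    moreover have "\<Union> ((\<lambda>Y. gg Y i) ` S) \<subseteq> u" using u(2) by blast
    ultimately show "gg x i \<subseteq> u" unfolding eq by blast
  qed
next
  fix x y :: "'a set" assume a: "x \<in> Id_lattice" "y \<in> Id_lattice" and e: "\<forall>i\<in>J. gg x i = gg y i"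
  have xi: "is_ideal x" "is_ideal y" using a unfolding Id_lattice_def by simp_all
  have "x \<subseteq> y" using ideal_incl[OF xi e] .
  moreover have "y \<subseteq> x" using ideal_incl[OF xi(2) xi(1)] e by simp
  ultimately show "x = y" by (rule antisym)
qed

end

lemma ordleq_refl_card: "(card_of A, card_of A) \<in> ordLeq"
  by (rule ordLeq_refl[OF card_of_Card_order])

theorem proposition7p6:
  shows
    "(\<forall>(I::'i set) (C::'i \<Rightarrow> 'c set) L (g::'a::{semilattice_sup, order_bot} set \<Rightarrow> 'i \<Rightarrow> 'c).
        nabla_embedding Id_lattice (\<subseteq>) I C L g \<longrightarrow>
        (\<exists>(J::'i set) (D::'i \<Rightarrow> 'c set) M (f::'a \<Rightarrow> 'i \<Rightarrow> 'c).
            (card_of J, card_of I) \<in> ordLeq \<and> vee_embedding J D M f))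
   \<and> (\<forall>(J::'j set) (D::'j \<Rightarrow> 'd set) M (f::'a \<Rightarrow> 'j \<Rightarrow> 'd).
        finite J \<and> vee_embedding J D M f \<longrightarrow>
        (\<exists>(I::'j set) (C::'j \<Rightarrow> 'd set set) L (g::'a set \<Rightarrow> 'j \<Rightarrow> 'd set).
            (card_of I, card_of J) \<in> ordLeq \<and> nabla_embedding Id_lattice (\<subseteq>) I C L g))"
proof (intro conjI allI impI)
  fix I :: "'i set" and C :: "'i \<Rightarrow> 'c set" and L and g :: "'a set \<Rightarrow> 'i \<Rightarrow> 'c"
  assume h: "nabla_embedding Id_lattice (\<subseteq>) I C L g"
  show "\<exists>(J::'i set) (D::'i \<Rightarrow> 'c set) M (f::'a \<Rightarrow> 'i \<Rightarrow> 'c).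
            (card_of J, card_of I) \<in> ordLeq \<and> vee_embedding J D M f"
    by (intro exI conjI, rule ordleq_refl_card, rule part1[OF h])
next
  fix J :: "'j set" and D :: "'j \<Rightarrow> 'd set" and M and f :: "'a \<Rightarrow> 'j \<Rightarrow> 'd"
  assume h: "finite J \<and> vee_embedding J D M f"
  then have fin: "finite J" and ve: "vee_embedding J D M f" by auto
  show "\<exists>(I::'j set) (C::'j \<Rightarrow> 'd set set) L (g::'a set \<Rightarrow> 'j \<Rightarrow> 'd set).
            (card_of I, card_of J) \<in> ordLeq \<and> nabla_embedding Id_lattice (\<subseteq>) I C L g"
    by (intro exI conjI, rule ordleq_refl_card, rule part2[OF fin ve])
qed

end
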